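(* Let $\mathcal M$ be a left $\mathcal A$-module and $N$ an $R$-submodule of $\mathcal M$. Then for every choice of $\vartheta$, \[ I_N = N\cap\sigma_\vartheta(N)=N\cap\tau_\vartheta(N). \] In particular, $N\cap\sigma_\vartheta(N)$ and $N\cap\tau_\vartheta(N)$ are $\mathcal A$-submodules of $\mathcal M$.
   Context: $R$ is a unital commutative ring and $\mathcal A$ an associative unital (not necessarily commutative) $R$-algebra. The symbol $\vartheta$ ranges over the four options "left", "right", "pre-two-sided", "two-sided". An $R$-submodule $J\subseteq\mathcal A$ is a left (resp. right; two-sided) Mathieu subspace of $\mathcal A$ if whenever $a\in\mathcal A$ satisfies $a^m\in J$ for all $m\ge1$, then for all $b,c\in\mathcal A$ there is $N_0\ge1$ with $ba^m\in J$ (resp. $a^mc\in J$; $ba^mc\in J$) for all $m\ge N_0$; it is a pre-two-sided Mathieu subspace if it is both a left and a right Mathieu subspace. A $\vartheta$-ideal means a left (resp. right; two-sided) ideal for $\vartheta$ = left (resp. right; two-sided), and a two-sided ideal for $\vartheta$ = pre-two-sided. All modules are left modules. For a left $\mathcal A$-module $\mathcal M$, $u\in\mathcal M$ and a subset $N\subseteq\mathcal M$, put $(N:u)=\{a\in\mathcal A: au\in N\}$. For an $R$-submodule $N$ of $\mathcal M$, $\sigma_\vartheta(N)$ is the set of $u\in\mathcal M$ such that $(N:u)$ is a $\vartheta$-ideal of $\mathcal A$, and $\tau_\vartheta(N)$ is the set of $u\in\mathcal M$ such that $(N:u)$ is a $\vartheta$-Mathieu subspace of $\mathcal A$. $I_N$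 denotes the largest $\mathcal A$-submodule of $\mathcal M$ contained in $N$ (the sum of all $\mathcal A$-submodules of $\mathcal M$ contained in $N$). *)

theory Defs
  imports Main
begin

text \<open>Setting: R is a commutative ring (type 'r), the R-algebra A is the ring type 'a
  with scalar multiplication sm, and M is an abelian group (type 'm) with a left
  A-action act. R acts on M through the structure map r \<mapsto> sm r 1.\<close>

definition r_algebra :: "('r::comm_ring_1 \<Rightarrow> 'a::ring_1 \<Rightarrow> 'a) \<Rightarrow> bool" where
  "r_algebra sm \<longleftrightarrow>
     (\<forall>r s a. sm (r + s) a = sm r a + sm s a) \<and>
     (\<forall>r a b. sm r (a + b) = sm r a + sm r b) \<and>
     (\<forall>r s a. sm (r * s) a = sm r (sm s a)) \<and>
     (\<forall>a. sm 1 a = a) \<and>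
     (\<forall>r a b. sm r (a * b) = sm r a * b) \<and>
     (\<forall>r a b. sm r (a * b) = a * sm r b)"

definition left_module :: "('a::ring_1 \<Rightarrow> 'm::ab_group_add \<Rightarrow> 'm) \<Rightarrow> bool" where
  "left_module act \<longleftrightarrow>
     (\<forall>a b u. act (a + b) u = act a u + act b u) \<and>
     (\<forall>a u v. act a (u + v) = act a u + act a v) \<and>
     (\<forall>a b u. act (a * b) u = act a (act b u)) \<and>
     (\<forall>u. act 1 u = u)"

definition r_submodule_alg :: "('r::comm_ring_1 \<Rightarrow> 'a::ring_1 \<Rightarrow> 'a) \<Rightarrow> 'a set \<Rightarrow> bool" where
  "r_submodule_alg sm J \<longleftrightarrow> 0 \<in> J \<and> (\<forall>a\<in>J. \<forall>b\<in>J. a + b \<in> J) \<and> (\<forall>r. \<forall>a\<in>J. sm r a \<in> J)"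

definition r_submodule_mod ::
  "('r::comm_ring_1 \<Rightarrow> 'a::ring_1 \<Rightarrow> 'a) \<Rightarrow> ('a \<Rightarrow> 'm::ab_group_add \<Rightarrow> 'm) \<Rightarrow> 'm set \<Rightarrow> bool" where
  "r_submodule_mod sm act N \<longleftrightarrow> 0 \<in> N \<and> (\<forall>u\<in>N. \<forall>v\<in>N. u + v \<in> N) \<and>
     (\<forall>r. \<forall>u\<in>N. act (sm r 1) u \<in> N)"

definition a_submodule :: "('a::ring_1 \<Rightarrow> 'm::ab_group_add \<Rightarrow> 'm) \<Rightarrow> 'm set \<Rightarrow> bool" where
  "a_submodule act P \<longleftrightarrow> 0 \<in> P \<and> (\<forall>u\<in>P. \<forall>v\<in>P. u + v \<in> P) \<and> (\<forall>a. \<forall>u\<in>P. act a u \<in> P)"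

text \<open>I_N: the sum of all A-submodules contained in N (= the A-submodule generated by their union).\<close>
definition I_sub :: "('a::ring_1 \<Rightarrow> 'm::ab_group_add \<Rightarrow> 'm) \<Rightarrow> 'm set \<Rightarrow> 'm set" where
  "I_sub act N = \<Inter>{P. a_submodule act P \<and> \<Union>{Q. a_submodule act Q \<and> Q \<subseteq> N} \<subseteq> P}"

datatype theta = Left | Right | PreTwoSided | TwoSided

definition left_ideal where
  "left_ideal sm J \<longleftrightarrow> r_submodule_alg sm J \<and> (\<forall>b. \<forall>a\<in>J. b * a \<in> J)"
definition right_ideal where
  "right_ideal sm J \<longleftrightarrow> r_submodule_alg sm J \<and> (\<forall>c. \<forall>a\<in>J. a * c \<in> J)"
definition two_sided_ideal where
  "two_sided_ideal sm J \<longleftrightarrow> left_ideal sm J \<and> right_ideal sm J"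

definition theta_ideal :: "('r::comm_ring_1 \<Rightarrow> 'a::ring_1 \<Rightarrow> 'a) \<Rightarrow> theta \<Rightarrow> 'a set \<Rightarrow> bool" where
  "theta_ideal sm th J = (case th of Left \<Rightarrow> left_ideal sm J | Right \<Rightarrow> right_ideal sm J
     | PreTwoSided \<Rightarrow> two_sided_ideal sm J | TwoSided \<Rightarrow> two_sided_ideal sm J)"

definition left_MS where
  "left_MS sm J \<longleftrightarrow> r_submodule_alg sm J \<and>
     (\<forall>a. (\<forall>m\<ge>1. a ^ m \<in> J) \<longrightarrow> (\<forall>b. \<exists>N0\<ge>1. \<forall>m\<ge>N0. b * a ^ m \<in> J))"
definition right_MS where
  "right_MS sm J \<longleftrightarrow> r_submodule_alg sm J \<and>
     (\<forall>a. (\<forall>m\<ge>1. a ^ m \<in> J) \<longrightarrow> (\<forall>c. \<exists>N0\<ge>1. \<forall>m\<ge>N0. a ^ m * c \<in> J))"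
definition two_sided_MS where
  "two_sided_MS sm J \<longleftrightarrow> r_submodule_alg sm J \<and>
     (\<forall>a. (\<forall>m\<ge>1. a ^ m \<in> J) \<longrightarrow> (\<forall>b c. \<exists>N0\<ge>1. \<forall>m\<ge>N0. b * a ^ m * c \<in> J))"

definition theta_MS :: "('r::comm_ring_1 \<Rightarrow> 'a::ring_1 \<Rightarrow> 'a) \<Rightarrow> theta \<Rightarrow> 'a set \<Rightarrow> bool" where
  "theta_MS sm th J = (case th of Left \<Rightarrow> left_MS sm J | Right \<Rightarrow> right_MS sm J
     | PreTwoSided \<Rightarrow> left_MS sm J \<and> right_MS sm J | TwoSided \<Rightarrow> two_sided_MS sm J)"

definition colon :: "('a \<Rightarrow> 'm \<Rightarrow> 'm) \<Rightarrow> 'm set \<Rightarrow> 'm \<Rightarrow> 'a set" where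
  "colon act N u = {a. act a u \<in> N}"

definition sigma_th ::
  "('r::comm_ring_1 \<Rightarrow> 'a::ring_1 \<Rightarrow> 'a) \<Rightarrow> ('a \<Rightarrow> 'm \<Rightarrow> 'm) \<Rightarrow> theta \<Rightarrow> 'm set \<Rightarrow> 'm set" where
  "sigma_th sm act th N = {u. theta_ideal sm th (colon act N u)}"

definition tau_th ::
  "('r::comm_ring_1 \<Rightarrow> 'a::ring_1 \<Rightarrow> 'a) \<Rightarrow> ('a \<Rightarrow> 'm \<Rightarrow> 'm) \<Rightarrow> theta \<Rightarrow> 'm set \<Rightarrow> 'm set" where
  "tau_th sm act th N = {u. theta_MS sm th (colon act N u)}"

end

theory Submission
  imports Defs
begin

lemma act_zero:
  assumes "left_module act" shows "act a (0::'m::ab_group_add) = 0"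
proof -
  have "act a (0 + 0) = act a 0 + act a 0" using assms unfolding left_module_def by blast
  thus ?thesis by simp
qed

lemma S_sub:
  assumes "left_module act" "r_submodule_mod sm act N"
  shows "a_submodule act {u\<in>N. \<forall>a. act a u \<in> N}"
  using assms act_zero[OF assms(1)] unfolding a_submodule_def r_submodule_mod_def left_module_def
  by (smt (verit) mem_Collect_eq)

lemma I_eq:
  assumes "left_module act" "r_submodule_mod sm act N"
  shows "I_sub act N = {u\<in>N. \<forall>a. act a u \<in> N}"
proof -
  let ?S = "{u\<in>N. \<forall>a. act a u \<in> N}"
  have sub: "a_submodule act ?S" by (rule S_sub[OF assms])
  have U: "\<Union>{Q. a_submodule act Q \<and> Q \<subseteq> N} \<subseteq> ?S"
    unfolding a_submodule_def by blast
  show ?thesis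
  proof
    show "I_sub act N \<subseteq> ?S" unfolding I_sub_def using sub U by blast
    show "?S \<subseteq> I_sub act N" unfolding I_sub_def using sub by blast
  qed
qed

lemma colon_one:
  assumes "u \<in> N" "left_module act"
  shows "1 \<in> colon act N u"
  using assms unfolding colon_def left_module_def by simp

lemma ideal_iff:
  assumes "1 \<in> J"
  shows "theta_ideal sm th J \<longleftrightarrow> J = UNIV"
proof
  assume "theta_ideal sm th J"
  then have "(\<forall>b. \<forall>a\<in>J. b * a \<in> J) \<or> (\<forall>c. \<forall>a\<in>J. a * c \<in> J)"
    unfolding theta_ideal_def left_ideal_def right_ideal_def two_sided_ideal_def
    by (cases th) auto
  thus "J = UNIV" using assms by (metis UNIV_eq_I mult_1_left mult_1_right)
next
  assume "J = UNIV" thus "theta_ideal sm th J"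
    unfolding theta_ideal_def left_ideal_def right_ideal_def two_sided_ideal_def r_submodule_alg_def
    by (cases th) auto
qed

lemma MS_iff:
  assumes "1 \<in> J"
  shows "theta_MS sm th J \<longleftrightarrow> J = UNIV"
proof
  have p: "\<forall>m\<ge>1. (1::'a) ^ m \<in> J" using assms by simp
  assume "theta_MS sm th J"
  then have "(\<forall>b. \<exists>N0\<ge>1. \<forall>m\<ge>N0. b * (1::'a) ^ m \<in> J) \<or> (\<forall>c. \<exists>N0\<ge>1. \<forall>m\<ge>N0. (1::'a) ^ m * c \<in> J)
     \<or> (\<forall>b c. \<exists>N0\<ge>1. \<forall>m\<ge>N0. b * (1::'a) ^ m * c \<in> J)"
  proof -
    have l: "left_MS sm J \<Longrightarrow> ?thesis" unfolding left_MS_def using p by blast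
    have r: "right_MS sm J \<Longrightarrow> ?thesis" unfolding right_MS_def using p by blast
    have t: "two_sided_MS sm J \<Longrightarrow> ?thesis" unfolding two_sided_MS_def using p by blast
    show ?thesis using `theta_MS sm th J` l r t unfolding theta_MS_def by (cases th) auto
  qed
  thus "J = UNIV"
  proof (elim disjE)
    assume h: "\<forall>b. \<exists>N0\<ge>1. \<forall>m\<ge>N0. b * (1::'a) ^ m \<in> J"
    show ?thesis
    proof (rule UNIV_eq_I[symmetric])
      fix b from h obtain N0 where "\<forall>m\<ge>N0. b * (1::'a) ^ m \<in> J" by blast
      thus "b \<in> J" by auto
    qed
  next
    assume h: "\<forall>c. \<exists>N0\<ge>1. \<forall>m\<ge>N0. (1::'a) ^ m * c \<in> J"
    show ?thesis
    proof (rule UNIV_eq_I[symmetric])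
      fix b from h obtain N0 where "\<forall>m\<ge>N0. (1::'a) ^ m * b \<in> J" by blast
      thus "b \<in> J" by auto
    qed
  next
    assume h: "\<forall>b c. \<exists>N0\<ge>1. \<forall>m\<ge>N0. b * (1::'a) ^ m * c \<in> J"
    show ?thesis
    proof (rule UNIV_eq_I[symmetric])
      fix b from h obtain N0 where "\<forall>m\<ge>N0. b * (1::'a) ^ m * 1 \<in> J" by blast
      thus "b \<in> J" by auto
    qed
  qed
next
  assume "J = UNIV" thus "theta_MS sm th J"
    unfolding theta_MS_def left_MS_def right_MS_def two_sided_MS_def r_submodule_alg_def
    by (cases th) auto
qed

theorem theorem3p11:
  fixes sm :: "'r::comm_ring_1 \<Rightarrow> 'a::ring_1 \<Rightarrow> 'a"
    and act :: "'a \<Rightarrow> 'm::ab_group_add \<Rightarrow> 'm"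
    and N :: "'m set" and th :: theta
  assumes "r_algebra sm" and "left_module act" and "r_submodule_mod sm act N"
  shows "I_sub act N = N \<inter> sigma_th sm act th N \<and> I_sub act N = N \<inter> tau_th sm act th N
    \<and> a_submodule act (N \<inter> sigma_th sm act th N) \<and> a_submodule act (N \<inter> tau_th sm act th N)"
proof -
  let ?S = "{u\<in>N. \<forall>a. act a u \<in> N}"
  have s: "N \<inter> sigma_th sm act th N = ?S"
  proof -
    have "\<And>u. u \<in> N \<Longrightarrow> (u \<in> sigma_th sm act th N \<longleftrightarrow> (\<forall>a. act a u \<in> N))"
    proof -
      fix u assume u: "u \<in> N"
      have "u \<in> sigma_th sm act th N \<longleftrightarrow> colon act N u = UNIV"
        unfolding sigma_th_def using ideal_iff[OF colon_one[OF u assms(2)]] by simp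
      thus "u \<in> sigma_th sm act th N \<longleftrightarrow> (\<forall>a. act a u \<in> N)" by (auto simp: colon_def)
    qed
    thus ?thesis by blast
  qed
  have t: "N \<inter> tau_th sm act th N = ?S"
  proof -
    have "\<And>u. u \<in> N \<Longrightarrow> (u \<in> tau_th sm act th N \<longleftrightarrow> (\<forall>a. act a u \<in> N))"
    proof -
      fix u assume u: "u \<in> N"
      have "u \<in> tau_th sm act th N \<longleftrightarrow> colon act N u = UNIV"
        unfolding tau_th_def using MS_iff[OF colon_one[OF u assms(2)]] by simp
      thus "u \<in> tau_th sm act th N \<longleftrightarrow> (\<forall>a. act a u \<in> N)" by (auto simp: colon_def)
    qed
    thus ?thesis by blast
  qed
  show ?thesis using s t I_eq[OF assms(2,3)] S_sub[OF assms(2,3)] by simp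
qed

end
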